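(* Let $\mu$ be a non-uniform Bernoulli measure on $\Sigma=\{1,\dots,K\}^{\mathbb N}$ and let $g:\mathbb N\to[1,\infty)$ be a function with $\limsup_{n\to\infty}\frac{g(n)}{\sqrt{\log\log n}}\le1$ and $\lim_{n\to\infty}g(n)=\infty$. Then there exists a sequence of positive integers $(n_k)_{k\ge1}$ such that $$\mu\left(\left\{\mathbf i\in\Sigma:\limsup_{k\to\infty}\frac{\log\mu([\mathbf i|_1^{n_k}])+h_\mu n_k}{\sqrt{2\rho_\mu n_k}\,g(n_k)}\le\frac12\right\}\right)=1.$$
   Context: Let $K\ge2$ and $\Sigma=\{1,\dots,K\}^{\mathbb N}$. For $\mathbf i\in\Sigma$, $[\mathbf i|_1^n]$ denotes the cylinder of sequences whose first $n$ terms are $i_1,\dots,i_n$. For a probability vector $(p_i)_{i=1}^K$, the Bernoulli measure $\mu$ assigns $[i_1\dots i_n]$ measure $p_{i_1}\cdots p_{i_n}$; it is non-uniform if $p_i\ne1/K$ for some $i$. Entropy $h_\mu=-\sum_ip_i\log p_i$, variance $\rho_\mu=\sum_ip_i(\log p_i)^2-(\sum_ip_i\log p_i)^2$. Convention: $\log x=0$ for $x\le1$. *)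

theory Defs
  imports "HOL-Probability.Probability"
begin

definition Log :: "real \<Rightarrow> real" where
  "Log x = (if x \<le> 1 then 0 else ln x)"

text \<open>Full shift on {1..K} (sequences indexed by nat, position 0 = first term)
  with the Bernoulli measure of the probability vector p.\<close>
definition bernoulli_measure :: "nat \<Rightarrow> (nat \<Rightarrow> real) \<Rightarrow> (nat \<Rightarrow> nat) measure" where
  "bernoulli_measure K p =
     PiM UNIV (\<lambda>_. density (count_space {1..K}) (\<lambda>i. ennreal (p i)))"

definition cylinder :: "nat \<Rightarrow> nat \<Rightarrow> (nat \<Rightarrow> nat) \<Rightarrow> (nat \<Rightarrow> nat) set" where
  "cylinder K n i = {x \<in> space (PiM UNIV (\<lambda>_::nat. count_space {1..K})). \<forall>j<n. x j = i j}"

definition entropy_vec :: "nat \<Rightarrow> (nat \<Rightarrow> real) \<Rightarrow> real" where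
  "entropy_vec K p = - (\<Sum>i\<in>{1..K}. p i * ln (p i))"

definition variance_vec :: "nat \<Rightarrow> (nat \<Rightarrow> real) \<Rightarrow> real" where
  "variance_vec K p = (\<Sum>i\<in>{1..K}. p i * (ln (p i))\<^sup>2) - (\<Sum>i\<in>{1..K}. p i * ln (p i))\<^sup>2"

end

theory Submission
  imports Defs
begin

context
  fixes K :: nat and p :: "nat \<Rightarrow> real"
  assumes K1: "K \<ge> 1" and pn: "\<forall>i\<in>{1..K}. p i \<ge> 0" and ps: "(\<Sum>i\<in>{1..K}. p i) = 1"
begin

definition "Mi = density (count_space {1..K}) (\<lambda>i. ennreal (p i))"

lemma sets_Mi[simp, measurable_cong]: "sets Mi = sets (count_space {1..K})"
  by (simp add: Mi_def)

lemma space_Mi[simp]: "space Mi = {1..K}"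
  by (simp add: Mi_def)

lemma meas_Mi[measurable]: "f \<in> measurable Mi N \<longleftrightarrow> f \<in> {1..K} \<rightarrow> space N"
  by (simp add: measurable_cong_sets[OF sets_Mi refl])

lemma emeasure_Mi_single: "i \<in> {1..K} \<Longrightarrow> emeasure Mi {i} = ennreal (p i)"
  unfolding Mi_def
  by (subst emeasure_density) (auto simp: nn_integral_count_space_finite indicator_def if_distrib cong: if_cong)

lemma emeasure_Mi_space: "emeasure Mi {1..K} = 1"
proof -
  have "emeasure Mi {1..K} = (\<Sum>x\<in>{1..K}. ennreal (p x))"
    unfolding Mi_def
    by (subst emeasure_density) (auto simp: nn_integral_count_space_finite)
  also have "\<dots> = ennreal (\<Sum>x\<in>{1..K}. p x)"
    using pn by (subst sum_ennreal) auto
  finally show ?thesis using ps by simp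
qed

lemma prob_Mi: "prob_space Mi"
proof
  show "emeasure Mi (space Mi) = 1" using emeasure_Mi_space by simp
qed

definition "MM = PiM UNIV (\<lambda>_::nat. Mi)"

lemma MM_eq: "MM = bernoulli_measure K p"
  by (simp add: MM_def Mi_def bernoulli_measure_def)

interpretation PP: product_prob_space "\<lambda>_::nat. Mi" UNIV
  by (simp add: product_prob_space_def product_prob_space_axioms_def product_sigma_finite_def prob_Mi prob_space_imp_sigma_finite)

interpretation MP: prob_space MM
  unfolding MM_def by (rule PP.P.prob_space_axioms)

lemma space_MM: "space MM = (UNIV \<rightarrow>\<^sub>E {1..K})"
  by (simp add: MM_def space_PiM)

lemma cyl_eq: "x \<in> space MM \<Longrightarrow> cylinder K n x = {y\<in>space MM. \<forall>j\<in>{..<n}. y j \<in> {x j}}"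
  by (auto simp: cylinder_def space_MM space_PiM)

lemma measure_cyl: "x \<in> space MM \<Longrightarrow> measure MM (cylinder K n x) = (\<Prod>j<n. p (x j))"
proof -
  assume x: "x \<in> space MM"
  then have xj: "x j \<in> {1..K}" for j by (auto simp: space_MM)
  then have xj1: "1 \<le> x j" "x j \<le> K" for j by auto
  have "emeasure MM (cylinder K n x) = (\<Prod>j<n. emeasure Mi {x j})"
    unfolding cyl_eq[OF x] MM_def
    by (rule PP.emeasure_PiM_Collect) (use xj1 in \<open>auto simp: Suc_le_eq\<close>)
  also have "\<dots> = (\<Prod>j<n. ennreal (p (x j)))"
    using xj by (simp add: emeasure_Mi_single)
  also have "\<dots> = ennreal (\<Prod>j<n. p (x j))"
    using xj pn by (subst prod_ennreal) auto
  finally show ?thesis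
    using xj pn by (simp add: MP.emeasure_eq_measure prod_nonneg)
qed

lemma indep_coord: "MP.indep_vars (\<lambda>_. Mi) (\<lambda>j x. x j) UNIV"
proof -
  have "distr MM (PiM UNIV (\<lambda>_. Mi)) (\<lambda>x. \<lambda>j\<in>UNIV. x j) = PiM UNIV (\<lambda>j. distr MM Mi (\<lambda>x. x j))"
  proof -
    have "distr MM (PiM UNIV (\<lambda>_. Mi)) (\<lambda>x. \<lambda>j\<in>UNIV. x j) = distr MM MM (\<lambda>x. x)"
      by (simp add: MM_def restrict_def)
    also have "\<dots> = MM" by simp
    also have "\<dots> = PiM UNIV (\<lambda>j. distr MM Mi (\<lambda>x. x j))"
      unfolding MM_def using PP.PiM_component by simp
    finally show ?thesis .
  qed
  then show ?thesis
    by (subst MP.indep_vars_iff_distr_eq_PiM) (auto simp: MM_def)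
qed

definition "X = (\<lambda>j x. ln (p (x j)))"

lemma indep_X: "MP.indep_vars (\<lambda>_. borel) X UNIV"
proof -
  have "MP.indep_vars (\<lambda>_. borel) (\<lambda>j. (\<lambda>y. ln (p y)) \<circ> (\<lambda>x. x j)) UNIV"
    by (rule MP.indep_vars_compose[OF indep_coord]) auto
  then show ?thesis by (simp add: X_def o_def fun_eq_iff)
qed

lemma exp_X: "MP.expectation (X j) = (\<Sum>i\<in>{1..K}. p i * ln (p i))"
proof -
  have "MP.expectation (X j) = integral\<^sup>L (distr MM Mi (\<lambda>x. x j)) (\<lambda>y. ln (p y))"
    by (subst integral_distr) (auto simp: X_def MM_def)
  also have "\<dots> = integral\<^sup>L Mi (\<lambda>y. ln (p y))"
    unfolding MM_def using PP.PiM_component by simp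
  also have "\<dots> = (\<integral>y. p y * ln (p y) \<partial>count_space {1..K})"
    unfolding Mi_def by (subst integral_density) (auto simp: pn)
  also have "\<dots> = (\<Sum>i\<in>{1..K}. p i * ln (p i))"
    by (simp add: lebesgue_integral_count_space_finite)
  finally show ?thesis .
qed

lemma AE_pos: "AE x in MM. \<forall>j. p (x j) > 0"
proof -
  have "AE x in MM. p (x j) > 0" for j
  proof -
    have "AE y in Mi. p y > 0"
      unfolding Mi_def by (subst AE_density) (auto simp: AE_count_space)
    then show ?thesis unfolding MM_def by (rule PP.AE_component[of j "\<lambda>y. p y > 0", OF UNIV_I])
  qed
  then show ?thesis by (simp add: AE_all_countable)
qed

lemma X_meas[measurable]: "X j \<in> borel_measurable MM"
proof -
  have 1: "(\<lambda>x. x j) \<in> measurable MM Mi" unfolding MM_def by (rule measurable_component_singleton) simp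
  have 2: "(\<lambda>y. ln (p y)) \<in> borel_measurable Mi" by simp
  show ?thesis using measurable_comp[OF 1 2] by (simp add: X_def o_def)
qed

lemma hoeff:
  fixes n :: nat and a b \<epsilon> :: real
  assumes n: "n > 0" and ab: "a < b" and e: "\<epsilon> \<ge> 0"
    and bnd: "\<And>i. i \<in> {1..K} \<Longrightarrow> ln (p i) \<in> {a..b}"
  shows "MP.prob {x\<in>space MM. \<bar>(\<Sum>j<n. X j x) - real n * (\<Sum>i\<in>{1..K}. p i * ln (p i))\<bar> \<ge> \<epsilon>}
           \<le> 2 * exp (-2 * \<epsilon>\<^sup>2 / (real n * (b - a)\<^sup>2))"
proof -
  interpret H: Hoeffding_ineq MM "{..<n}" X "\<lambda>_. a" "\<lambda>_. b" "\<Sum>j<n. MP.expectation (X j)"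
  proof unfold_locales
    show "MP.indep_vars (\<lambda>_. borel) X {..<n}"
      using indep_X by (rule MP.indep_vars_subset) auto
    fix j assume "j \<in> {..<n}"
    show "AE x in MM. X j x \<in> {a..b}"
    proof (rule AE_I2)
      fix x assume "x \<in> space MM"
      then have "x j \<in> {1..K}" by (auto simp: space_MM)
      then show "X j x \<in> {a..b}" using bnd by (simp add: X_def)
    qed
  qed simp_all
  have mu: "(\<Sum>j<n. MP.expectation (X j)) = real n * (\<Sum>i\<in>{1..K}. p i * ln (p i))"
    by (simp add: exp_X)
  have D: "(\<Sum>i<n. (b - a)\<^sup>2) = real n * (b - a)\<^sup>2" by simp
  have "0 < (\<Sum>i<n. (b - a)\<^sup>2)" using n ab by simp
  from H.Hoeffding_ineq_abs_ge[OF e this] show ?thesis unfolding mu D .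
qed

lemma main:
  fixes g :: "nat \<Rightarrow> real"
  assumes g_ge1: "\<forall>n. g n \<ge> 1" and g_lim: "filterlim g at_top sequentially"
  shows "\<exists>nk :: nat \<Rightarrow> nat. (\<forall>k. nk k > 0) \<and>
    measure MM
      {x \<in> space MM.
         limsup (\<lambda>k. ereal ((ln (measure MM (cylinder K (nk k) x))
                               + entropy_vec K p * real (nk k))
                  / (sqrt (2 * variance_vec K p * real (nk k)) * g (nk k)))) \<le> 1 / 2} = 1"
proof (cases "variance_vec K p = 0")
  case True
  show ?thesis
  proof (intro exI conjI allI)
    show "0 < (1::nat)" by simp
    have "{x \<in> space MM.
         limsup (\<lambda>k. ereal ((ln (measure MM (cylinder K 1 x))
                               + entropy_vec K p * real 1)
                  / (sqrt (2 * variance_vec K p * real 1) * g 1))) \<le> 1 / 2} = space MM"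
    proof -
      have "ereal 0 \<le> 1 / 2" by (simp add: zero_ereal_def[symmetric])
      then show ?thesis using True by (simp add: Limsup_const)
    qed
    then show "measure MM
      {x \<in> space MM.
         limsup (\<lambda>k. ereal ((ln (measure MM (cylinder K ((\<lambda>_. 1) k) x))
                               + entropy_vec K p * real ((\<lambda>_. 1::nat) k))
                  / (sqrt (2 * variance_vec K p * real ((\<lambda>_. 1::nat) k)) * g ((\<lambda>_. 1::nat) k)))) \<le> 1 / 2} = 1"
      by (simp add: MP.prob_space)
  qed
next
  case False
  define \<rho> where "\<rho> = variance_vec K p"
  define h where "h = entropy_vec K p"
  define E where "E = (\<Sum>i\<in>{1..K}. p i * ln (p i))"
  have hE: "h = - E" by (simp add: h_def E_def entropy_vec_def)
  define L where "L = (\<Sum>i\<in>{1..K}. \<bar>ln (p i)\<bar>)"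
  define a where "a = - L - 1"
  define b where "b = L + 1"
  have L0: "L \<ge> 0" unfolding L_def by (simp add: sum_nonneg)
  have ab: "a < b" using L0 by (simp add: a_def b_def)
  have bnd: "ln (p i) \<in> {a..b}" if "i \<in> {1..K}" for i
  proof -
    have "\<bar>ln (p i)\<bar> \<le> L" unfolding L_def
      by (rule member_le_sum[where f="\<lambda>i. \<bar>ln (p i)\<bar>", OF that]) auto
    then show ?thesis by (auto simp: a_def b_def)
  qed
  define c where "c = \<bar>sqrt (2 * \<rho>)\<bar>"
  have c0: "c > 0" using False by (simp add: c_def \<rho>_def)
  define D where "D = (b - a)\<^sup>2"
  have D0: "D > 0" using ab by (simp add: D_def)
  have "\<forall>k. \<exists>n. n > 0 \<and> g n \<ge> sqrt (2 * D * real k) / c"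
  proof
    fix k
    have "eventually (\<lambda>n. sqrt (2 * D * real k) / c \<le> g n) sequentially"
      using g_lim by (simp add: filterlim_at_top)
    then obtain N where "\<forall>n\<ge>N. sqrt (2 * D * real k) / c \<le> g n"
      by (auto simp: eventually_sequentially)
    then show "\<exists>n. n > 0 \<and> g n \<ge> sqrt (2 * D * real k) / c"
      by (intro exI[of _ "Suc N"]) auto
  qed
  then obtain nk where nk0: "\<And>k. nk k > 0" and nkg: "\<And>k. g (nk k) \<ge> sqrt (2 * D * real k) / c"
    by metis
  define S where "S = (\<lambda>(n::nat) x. \<Sum>j<n. X j x)"
  define t where "t = (\<lambda>n. c * sqrt (real n) * g n / 2)"
  define A where "A = (\<lambda>k. {x\<in>space MM. \<bar>S (nk k) x - real (nk k) * E\<bar> \<ge> t (nk k)})"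
  have A_meas[measurable]: "A k \<in> sets MM" for k
    unfolding A_def S_def by measurable
  have probA: "MP.prob (A k) \<le> 2 * exp (- real k)" for k
  proof -
    have "g (nk k) \<ge> 0" using g_ge1 by (smt (verit))
    then have t0: "t (nk k) \<ge> 0" using c0 by (simp add: t_def)
    have "MP.prob (A k) \<le> 2 * exp (-2 * (t (nk k))\<^sup>2 / (real (nk k) * (b - a)\<^sup>2))"
      unfolding A_def S_def E_def by (rule hoeff[OF nk0 ab t0 bnd])
    also have "-2 * (t (nk k))\<^sup>2 / (real (nk k) * (b - a)\<^sup>2) = - (c\<^sup>2 * (g (nk k))\<^sup>2 / (2 * D))"
      using nk0[of k] D0 by (simp add: t_def D_def power_mult_distrib field_simps)
    also have "\<dots> \<le> - real k"
    proof -
      have "sqrt (2 * D * real k) \<le> c * g (nk k)" using nkg[of k] c0 by (simp add: field_simps)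
      have Dk: "0 \<le> D * real k" using D0 by simp
      from this have "(sqrt (2 * D * real k))\<^sup>2 \<le> (c * g (nk k))\<^sup>2" using \<open>sqrt (2 * D * real k) \<le> c * g (nk k)\<close>
        by (intro power_mono) auto
      then have "2 * D * real k \<le> c\<^sup>2 * (g (nk k))\<^sup>2" using Dk by (simp add: power_mult_distrib)
      then show ?thesis using D0 by (simp add: field_simps)
    qed
    finally show ?thesis by simp
  qed
  have summ: "summable (\<lambda>k. MP.prob (A k))"
  proof (rule summable_comparison_test'[where N=0])
    have "summable (\<lambda>k. 2 * exp (-1::real) ^ k)"
      by (intro summable_mult summable_geometric) auto
    then show "summable (\<lambda>k. 2 * exp (- real k))"
      by (simp add: exp_of_nat_mult[symmetric] exp_minus field_simps power_inverse)
  qed (use probA in auto)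
  have AE1: "AE x in MM. eventually (\<lambda>k. x \<in> space MM - A k) sequentially"
    by (rule borel_cantelli_AE1[OF A_meas _ summ]) (simp add: MP.emeasure_eq_measure)
  define F where "F = (\<lambda>x. limsup (\<lambda>k. ereal ((ln (\<Prod>j<nk k. p (x j))
                               + h * real (nk k))
                  / (sqrt (2 * \<rho> * real (nk k)) * g (nk k)))))"
  have Feq: "{x \<in> space MM.
         limsup (\<lambda>k. ereal ((ln (measure MM (cylinder K (nk k) x))
                               + entropy_vec K p * real (nk k))
                  / (sqrt (2 * variance_vec K p * real (nk k)) * g (nk k)))) \<le> 1 / 2}
     = {x\<in>space MM. F x \<le> 1/2}"
    by (auto simp: F_def measure_cyl h_def \<rho>_def)
  have Fmeas: "{x\<in>space MM. F x \<le> 1/2} \<in> sets MM"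
  proof -
    have "(\<lambda>x. x j) \<in> measurable MM Mi" for j unfolding MM_def by (rule measurable_component_singleton) simp
    then have [measurable]: "(\<lambda>x. p (x j)) \<in> borel_measurable MM" for j
      by (rule measurable_compose) simp
    show ?thesis unfolding F_def by measurable
  qed
  have pt: "F x \<le> 1/2" if x: "x \<in> space MM" and pos: "\<forall>j. p (x j) > 0"
    and ev: "eventually (\<lambda>k. x \<in> space MM - A k) sequentially" for x
  proof -
    have "eventually (\<lambda>k. ereal ((ln (\<Prod>j<nk k. p (x j)) + h * real (nk k))
                  / (sqrt (2 * \<rho> * real (nk k)) * g (nk k))) \<le> 1/2) sequentially"
      using ev
    proof eventually_elim
      case (elim k)
      define n where "n = nk k"
      have n0: "n > 0" using nk0 by (simp add: n_def)
      have lnp: "ln (\<Prod>j<n. p (x j)) = S n x"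
        using pos unfolding S_def X_def by (intro ln_prod) (auto simp: less_imp_neq[symmetric])
      have num: "\<bar>S n x - real n * E\<bar> < t n" using elim x by (auto simp: A_def n_def)
      have gpos: "g n > 0" using g_ge1 by (smt (verit))
      have den: "\<bar>sqrt (2 * \<rho> * real n) * g n\<bar> = 2 * t n"
        using gpos by (simp add: t_def c_def real_sqrt_mult abs_mult)
      have tpos: "t n > 0" using c0 gpos n0 by (simp add: t_def)
      have "\<bar>(S n x - real n * E) / (sqrt (2 * \<rho> * real n) * g n)\<bar> \<le> 1/2"
        using num den tpos by (simp add: abs_divide divide_le_eq)
      then have "(S n x - real n * E) / (sqrt (2 * \<rho> * real n) * g n) \<le> 1/2" by linarith
      moreover have "(ln (\<Prod>j<n. p (x j)) + h * real n) = S n x - real n * E"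
        using lnp hE by simp
      moreover have half: "(1::ereal) / 2 = ereal (1/2)"
        by (simp add: one_ereal_def ereal_divide)
      ultimately show ?case by (simp only: n_def[symmetric] half ereal_less_eq)
    qed
    then show ?thesis unfolding F_def by (rule Limsup_bounded)
  qed
  have "AE x in MM. F x \<le> 1/2"
    using AE1 AE_pos AE_space
  proof eventually_elim
    case (elim x)
    show ?case using pt[OF elim(3) elim(2) elim(1)] .
  qed
  then have "measure MM {x\<in>space MM. F x \<le> 1/2} = 1"
    using MP.prob_Collect_eq_1[OF Fmeas] by simp
  then show ?thesis
    by (intro exI[of _ nk] conjI allI nk0) (simp only: Feq)
qed

end

theorem lemma6p1:
  fixes K :: nat and p :: "nat \<Rightarrow> real" and g :: "nat \<Rightarrow> real"
  assumes K2: "K \<ge> 2"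
    and p_nonneg: "\<forall>i\<in>{1..K}. p i \<ge> 0"
    and p_sum: "(\<Sum>i\<in>{1..K}. p i) = 1"
    and nonuniform: "\<exists>i\<in>{1..K}. p i \<noteq> 1 / real K"
    and g_ge1: "\<forall>n. g n \<ge> 1"
    and g_limsup: "limsup (\<lambda>n. ereal (g n / sqrt (Log (Log (real n))))) \<le> 1"
    and g_lim: "filterlim g at_top sequentially"
  shows "\<exists>nk :: nat \<Rightarrow> nat. (\<forall>k. nk k > 0) \<and>
    measure (bernoulli_measure K p)
      {x \<in> space (bernoulli_measure K p).
         limsup (\<lambda>k. ereal ((ln (measure (bernoulli_measure K p) (cylinder K (nk k) x))
                               + entropy_vec K p * real (nk k))
                  / (sqrt (2 * variance_vec K p * real (nk k)) * g (nk k)))) \<le> 1 / 2} = 1"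
proof -
  have K1: "K \<ge> 1" using K2 by simp
  have eq: "MM K p = bernoulli_measure K p"
    by (rule MM_eq[OF K1 p_nonneg p_sum])
  show ?thesis
    using main[OF K1 p_nonneg p_sum g_ge1 g_lim] unfolding eq .
qed

end
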